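(* Let $P>0$, let $\omega:[0,\infty)\to(0,\infty)$ be continuous, and let $\hat{x}:[0,\infty)\times\mathbb{R}\to\mathbb{R}^n$ satisfy $\hat{x}(\tau,t)=\hat{x}(\tau,t+P)$ for all $\tau,t$. For $\theta\in\mathbb{R}$ define $\Omega_\theta(t)=\theta+\int_0^t\omega(s)\,ds$ and $x_\theta(t)=\hat{x}\big(t,\Omega_\theta(t)\big)$. Let $L>0$ satisfy $L>\frac{P}{\omega(\tau)}$ for every $\tau>0$, and let $\varepsilon>0$. Suppose that $$\big\|\hat{x}(\tau+\delta,t)-\hat{x}(\tau,t)\big\|\le\varepsilon$$ for all $\tau>0$, all $t\in\mathbb{R}$ and all $\delta\in(0,L]$. Then for every $\theta\in\mathbb{R}$ and every $\tau>0$, $$\big\|x_\theta\big(\tau+T(\tau)\big)-x_\theta(\tau)\big\|\le\varepsilon,$$ where $T(\tau)>0$ is the unique solution of $P=\int_\tau^{\tau+T(\tau)}\omega(s)\,ds$.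
   Context: This arises from the multi-rate reformulation of circuit equations: $\hat{x}(\tau,t)$ is a multi-rate solution that is $P$-periodic in the fast variable $t$, $\omega$ is a positive frequency parameter, and $x_\theta$ is the single-rate signal recovered along the characteristic $t\mapsto(t,\Omega_\theta(t))$. *)

theory Defs
  imports "HOL-Analysis.Analysis"
begin

definition Omega :: "(real \<Rightarrow> real) \<Rightarrow> real \<Rightarrow> real \<Rightarrow> real" where
  "Omega \<omega> \<theta> t = \<theta> + integral {0..t} \<omega>"

definition xtheta :: "(real \<Rightarrow> real \<Rightarrow> real ^ 'n) \<Rightarrow> (real \<Rightarrow> real) \<Rightarrow> real \<Rightarrow> real \<Rightarrow> real ^ 'n" where
  "xtheta xh \<omega> \<theta> t = xh t (Omega \<omega> \<theta> t)"

definition Tper :: "real \<Rightarrow> (real \<Rightarrow> real) \<Rightarrow> real \<Rightarrow> real" where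
  "Tper P \<omega> \<tau> = (THE T. T > 0 \<and> P = integral {\<tau>..\<tau>+T} \<omega>)"

end

theory Submission
  imports Defs
begin

theorem lemma1:
  fixes P L \<epsilon> :: real and \<omega> :: "real \<Rightarrow> real"
    and xh :: "real \<Rightarrow> real \<Rightarrow> real ^ 'n"
  assumes P_pos: "P > 0"
    and \<omega>_cont: "continuous_on {0..} \<omega>"
    and \<omega>_pos: "\<And>s. s \<ge> 0 \<Longrightarrow> \<omega> s > 0"
    and periodic: "\<And>\<tau> t. \<tau> \<ge> 0 \<Longrightarrow> xh \<tau> t = xh \<tau> (t + P)"
    and L_pos: "L > 0"
    and L_bound: "\<And>\<tau>. \<tau> > 0 \<Longrightarrow> L > P / \<omega> \<tau>"
    and eps_pos: "\<epsilon> > 0"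
    and slow: "\<And>\<tau> t \<delta>. \<tau> > 0 \<Longrightarrow> 0 < \<delta> \<Longrightarrow> \<delta> \<le> L \<Longrightarrow>
                 norm (xh (\<tau> + \<delta>) t - xh \<tau> t) \<le> \<epsilon>"
  shows "\<forall>\<theta> \<tau>. \<tau> > 0 \<longrightarrow>
           norm (xtheta xh \<omega> \<theta> (\<tau> + Tper P \<omega> \<tau>) - xtheta xh \<omega> \<theta> \<tau>) \<le> \<epsilon>"
proof (intro allI impI)
  fix \<theta> \<tau> :: real assume tpos: "\<tau> > 0"
  have lb: "\<omega> s \<ge> P / L" if "s > 0" for s
  proof -
    have "P / \<omega> s < L" using L_bound that by auto
    hence "P < L * \<omega> s" using \<omega>_pos[of s] that by (simp add: divide_less_eq)
    thus ?thesis using L_pos by (simp add: divide_le_eq mult.commute)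
  qed
  have intg: "\<omega> integrable_on {a..b}" if "a \<ge> 0" for a b
    by (rule integrable_continuous_interval, rule continuous_on_subset[OF \<omega>_cont]) (use that in auto)
  have lower: "integral {a..b} \<omega> \<ge> (b - a) * (P / L)" if "a > 0" "a \<le> b" for a b
  proof -
    have "integral {a..b} (\<lambda>_. P / L) \<le> integral {a..b} \<omega>"
      by (rule integral_le) (use that intg lb in auto)
    thus ?thesis using that by simp
  qed
  have comb: "integral {a..c} \<omega> + integral {c..b} \<omega> = integral {a..b} \<omega>"
    if "0 \<le> a" "a \<le> c" "c \<le> b" for a b c
    by (rule Henstock_Kurzweil_Integration.integral_combine[where a=a and c=c and b=b and f=\<omega>]) (use that intg[of a b] in auto)
  define F where "F y = integral {\<tau>..y} \<omega>" for y
  have contF: "continuous_on {\<tau>..\<tau>+L} F"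
    unfolding F_def by (rule indefinite_integral_continuous_1, rule intg) (use tpos in auto)
  have F0: "F \<tau> = 0" unfolding F_def by simp
  have FL: "F (\<tau>+L) \<ge> P" unfolding F_def using lower[of \<tau> "\<tau>+L"] tpos L_pos by auto
  obtain y where y: "\<tau> \<le> y" "y \<le> \<tau>+L" "F y = P"
    using IVT'[of F \<tau> P "\<tau>+L", OF _ FL _ contF] F0 P_pos L_pos by fastforce
  define T where "T = y - \<tau>"
  have Tpos: "T > 0" using y F0 P_pos unfolding T_def by (cases "y = \<tau>") auto
  have TL: "T \<le> L" using y unfolding T_def by auto
  have TP: "P = integral {\<tau>..\<tau>+T} \<omega>" using y unfolding T_def F_def by simp
  have uniq: "T' = T" if "T' > 0" "P = integral {\<tau>..\<tau>+T'} \<omega>" for T'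
  proof (rule ccontr)
    assume ne: "T' \<noteq> T"
    have strict: "integral {\<tau>..\<tau>+A} \<omega> < integral {\<tau>..\<tau>+B} \<omega>" if "0 < A" "A < B" for A B
    proof -
      have "integral {\<tau>..\<tau>+A} \<omega> + integral {\<tau>+A..\<tau>+B} \<omega> = integral {\<tau>..\<tau>+B} \<omega>"
        using comb[of \<tau> "\<tau>+A" "\<tau>+B"] tpos that by auto
      moreover have "integral {\<tau>+A..\<tau>+B} \<omega> \<ge> (B - A) * (P / L)"
        using lower[of "\<tau>+A" "\<tau>+B"] tpos that by auto
      moreover have "(B - A) * (P / L) > 0" using that P_pos L_pos by auto
      ultimately show ?thesis by linarith
    qed
    show False
    proof (cases "T' < T")
      case True thus False using strict[of T' T] that TP by linarith
    next
      case False thus False using ne strict[of T T'] that Tpos TP by linarith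
    qed
  qed
  have Teq: "Tper P \<omega> \<tau> = T"
    unfolding Tper_def
    by (rule the_equality) (use Tpos TP uniq in blast)+
  have Om: "Omega \<omega> \<theta> (\<tau> + T) = Omega \<omega> \<theta> \<tau> + P"
    unfolding Omega_def using comb[of 0 \<tau> "\<tau>+T"] tpos Tpos TP by auto
  have "xtheta xh \<omega> \<theta> (\<tau> + T) = xh (\<tau> + T) (Omega \<omega> \<theta> \<tau>)"
    unfolding xtheta_def Om using periodic[of "\<tau>+T" "Omega \<omega> \<theta> \<tau>"] tpos Tpos by simp
  thus "norm (xtheta xh \<omega> \<theta> (\<tau> + Tper P \<omega> \<tau>) - xtheta xh \<omega> \<theta> \<tau>) \<le> \<epsilon>"
    unfolding Teq using slow[OF tpos Tpos TL] by (simp add: xtheta_def)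
qed

end
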